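(* Let $q$ be an odd prime power, $\omega$ a non-square in $\mathbb F_q$, $\epsilon\in\mathbb F_{q^2}$ with $\epsilon^2=\omega$, and write $z=z_1+\epsilon z_2$ ($z_i\in\mathbb F_q$) for $z\in\mathbb F_{q^2}$. Let $\mathcal C: aX^2+bXY+cXZ+dYZ+eZ^2=0$ be a non-singular conic of $\mathrm{PG}(2,q^2)$ with $d=1$ and $b\notin\mathbb F_q$. Put $A=-a_2b_1+a_1b_2$, $B=b_2c_1-b_1c_2-a_2d_1+a_1d_2$, $C=-c_2d_1+c_1d_2+b_2e_1-b_1e_2$, $D=d_2e_1-d_1e_2$, and let $\mathcal S\subset\mathrm{PG}(3,q)$ be the cubic surface in coordinates $(t_1:t_2:X:Z)$ with equation $$2t_1t_2(b_1X+d_1Z)-(t_1^2+\omega t_2^2)(b_2X+d_2Z)+AX^3+BX^2Z+CXZ^2+DZ^3=0.$$ Let $n_0$ and $n_\infty$ be the numbers of points of $\mathrm{PG}(3,q)$ on $\mathcal S$ with $t_1=t_2=0$ and with $X=Z=0$, respectively. Then $n_\infty=q+1$ and $n_0\in\{0,1,2,3\}$. *)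

theory Defs
  imports Main
begin

text \<open>A field embedding of F_q (type 'k) into F_{q^2} (type 'K).\<close>
definition field_emb :: "('k::field \<Rightarrow> 'K::field) \<Rightarrow> bool" where
  "field_emb f \<longleftrightarrow> f 1 = 1 \<and> (\<forall>x y. f (x + y) = f x + f y) \<and> (\<forall>x y. f (x * y) = f x * f y)"

definition qel :: "('k \<Rightarrow> 'K::field) \<Rightarrow> 'K \<Rightarrow> 'k \<Rightarrow> 'k \<Rightarrow> 'K" where
  "qel f eps z1 z2 = f z1 + eps * f z2"

definition conic_nonsingular :: "'K::field \<Rightarrow> 'K \<Rightarrow> 'K \<Rightarrow> 'K \<Rightarrow> 'K \<Rightarrow> bool" where
  "conic_nonsingular a b c d e \<longleftrightarrow>
     \<not> (\<exists>X Y Z. (X, Y, Z) \<noteq> (0, 0, 0) \<and>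
          a * X^2 + b * X * Y + c * X * Z + d * Y * Z + e * Z^2 = 0 \<and>
          2 * a * X + b * Y + c * Z = 0 \<and>
          b * X + d * Z = 0 \<and>
          c * X + d * Y + 2 * e * Z = 0)"

text \<open>Points of PG(3,q): classes of nonzero vectors (t1,t2,X,Z) up to nonzero scalars.\<close>
definition scale4 :: "'k::field \<Rightarrow> 'k \<times> 'k \<times> 'k \<times> 'k \<Rightarrow> 'k \<times> 'k \<times> 'k \<times> 'k" where
  "scale4 l v = (case v of (t1, t2, x, z) \<Rightarrow> (l * t1, l * t2, l * x, l * z))"

definition proj_point4 :: "'k::field \<times> 'k \<times> 'k \<times> 'k \<Rightarrow> ('k \<times> 'k \<times> 'k \<times> 'k) set" where
  "proj_point4 v = {scale4 l v | l. l \<noteq> 0}"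

definition count_points4 :: "('k::field \<times> 'k \<times> 'k \<times> 'k \<Rightarrow> bool) \<Rightarrow> nat" where
  "count_points4 P = card {proj_point4 v | v. v \<noteq> (0, 0, 0, 0) \<and> P v}"

definition surfS :: "'k::field \<Rightarrow> 'k \<Rightarrow> 'k \<Rightarrow> 'k \<Rightarrow> 'k \<Rightarrow> 'k \<Rightarrow> 'k \<Rightarrow> 'k \<Rightarrow> 'k
     \<Rightarrow> 'k \<times> 'k \<times> 'k \<times> 'k \<Rightarrow> bool" where
  "surfS \<omega> b1 b2 d1 d2 A B C D v = (case v of (t1, t2, X, Z) \<Rightarrow>
     2 * t1 * t2 * (b1 * X + d1 * Z) - (t1^2 + \<omega> * t2^2) * (b2 * X + d2 * Z)
     + A * X^3 + B * X^2 * Z + C * X * Z^2 + D * Z^3 = 0)"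

end

theory Submission
  imports Defs "HOL-Computational_Algebra.Polynomial"
begin

lemma emb_basic:
  assumes "field_emb E"
  shows "E 0 = 0" "E (x + y) = E x + E y" "E (x * y) = E x * E y" "E 1 = 1"
    "E (- x) = - E x" "E (x - y) = E x - E y"
proof -
  have add: "\<And>x y. E (x + y) = E x + E y" and mul: "\<And>x y. E (x * y) = E x * E y"
    and one: "E 1 = 1" using assms by (auto simp: field_emb_def)
  have z: "E 0 = 0" using add[of 0 0] by (metis add_0 add_cancel_right_right)
  show "E 0 = 0" by (rule z)
  show "E (x + y) = E x + E y" "E (x * y) = E x * E y" "E 1 = 1" by (auto simp: add mul one)
  have n: "\<And>w. E (- w) = - E w" 
  proof -
    fix w have "E w + E (- w) = 0" using add[of w "-w"] z by simp
    then show "E (- w) = - E w" by (simp add: eq_neg_iff_add_eq_0 add.commute)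
  qed
  show "E (- x) = - E x" by (rule n)
  show "E (x - y) = E x - E y" using add[of x "-y"] n[of y] by simp
qed

lemma emb_inv:
  assumes "field_emb E" "x \<noteq> 0"
  shows "E (inverse x) = inverse (E x)"
proof -
  have "E x * E (inverse x) = 1" using emb_basic[OF assms(1)] assms(2)
    by (metis right_inverse)
  then show ?thesis by (metis inverse_unique)
qed

lemma emb_inj:
  assumes "field_emb E" "E x = E y" shows "x = y"
proof (rule ccontr)
  assume "x \<noteq> y"
  then have "x - y \<noteq> 0" by simp
  then have "E ((x - y) * inverse (x - y)) = 1" using emb_basic[OF assms(1)] by simp
  moreover have "E (x - y) = 0" using emb_basic(6)[OF assms(1)] assms(2) by simp
  ultimately show False using emb_basic(3)[OF assms(1)] by simp
qed

lemma indep: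
  fixes E :: "'k::field \<Rightarrow> 'K::field"
  assumes E: "field_emb E" and eps: "\<epsilon> \<notin> range E"
    and eq: "E x + \<epsilon> * E y = E x' + \<epsilon> * E y'"
  shows "x = x' \<and> y = y'"
proof -
  have yy: "y = y'"
  proof (rule ccontr)
    assume "y \<noteq> y'"
    then have ne: "y' - y \<noteq> 0" by simp
    have "\<epsilon> * (E y' - E y) = E x - E x'" using eq by (simp add: algebra_simps)
    then have "\<epsilon> * E (y' - y) = E (x - x')" using emb_basic[OF E] by simp
    moreover have "E (y' - y) \<noteq> 0" using ne emb_inj[OF E, of "y' - y" 0] emb_basic(1)[OF E] by auto
    ultimately have "\<epsilon> = E (x - x') / E (y' - y)" by (simp add: field_simps)
    also have "\<dots> = E ((x - x') * inverse (y' - y))"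
      using emb_basic(3)[OF E] emb_inv[OF E ne] by (simp add: divide_inverse)
    finally show False using eps by auto
  qed
  then have "E x = E x'" using eq by simp
  then show ?thesis using emb_inj[OF E] yy by auto
qed

lemma scale4_scale4: "scale4 m (scale4 l w) = scale4 (m * l) w"
  by (cases w) (auto simp: scale4_def)

lemma proj_scale:
  fixes w :: "'k::field \<times> 'k \<times> 'k \<times> 'k"
  assumes "l \<noteq> 0" shows "proj_point4 (scale4 l w) = proj_point4 w"
proof
  show "proj_point4 (scale4 l w) \<subseteq> proj_point4 w"
    using assms by (auto simp: proj_point4_def scale4_scale4)
next
  show "proj_point4 w \<subseteq> proj_point4 (scale4 l w)"
  proof
    fix u assume "u \<in> proj_point4 w"
    then obtain m where m: "m \<noteq> 0" "u = scale4 m w" by (auto simp: proj_point4_def)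
    have "u = scale4 (m / l) (scale4 l w)" using m assms by (simp add: scale4_scale4)
    then show "u \<in> proj_point4 (scale4 l w)" using m assms by (auto simp: proj_point4_def)
  qed
qed

lemma self_in_proj: "(v::'k::field \<times> 'k \<times> 'k \<times> 'k) \<in> proj_point4 v"
  unfolding proj_point4_def
  by (rule CollectI, rule exI[of _ 1]) (cases v, simp add: scale4_def)


lemma cubic_nonzero:
  fixes E :: "'k::field \<Rightarrow> 'K::field"
  assumes E: "field_emb E"
    and nsq: "\<not> (\<exists>x::'k. x^2 = \<omega>)"
    and eps2: "\<epsilon>^2 = E \<omega>"
    and ns: "conic_nonsingular (qel E \<epsilon> a1 a2) (qel E \<epsilon> b1 b2) (qel E \<epsilon> c1 c2)
           (qel E \<epsilon> d1 d2) (qel E \<epsilon> e1 e2)"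
    and d: "qel E \<epsilon> d1 d2 = 1"
    and b: "qel E \<epsilon> b1 b2 \<notin> range E"
  shows "\<not> (- a2 * b1 + a1 * b2 = 0 \<and> b2 * c1 - b1 * c2 - a2 * d1 + a1 * d2 = 0 \<and>
            - c2 * d1 + c1 * d2 + b2 * e1 - b1 * e2 = 0 \<and> d2 * e1 - d1 * e2 = 0)"
proof
  assume H: "- a2 * b1 + a1 * b2 = 0 \<and> b2 * c1 - b1 * c2 - a2 * d1 + a1 * d2 = 0 \<and>
            - c2 * d1 + c1 * d2 + b2 * e1 - b1 * e2 = 0 \<and> d2 * e1 - d1 * e2 = 0"
  note eb = emb_basic[OF E]
  have eps: "\<epsilon> \<notin> range E"
  proof
    assume "\<epsilon> \<in> range E"
    then obtain u where "\<epsilon> = E u" by auto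
    then have "E (u^2) = E \<omega>" using eps2 eb(3)[of u u] by (simp add: power2_eq_square)
    then have "u^2 = \<omega>" by (rule emb_inj[OF E])
    then show False using nsq by auto
  qed
  have "E d1 + \<epsilon> * E d2 = E 1 + \<epsilon> * E 0" using d eb by (simp add: qel_def)
  then have dd: "d1 = 1" "d2 = 0" using indep[OF E eps] by auto
  have b2: "b2 \<noteq> 0" using b eb by (auto simp: qel_def)
  define p where "p = c1 - b1 * e1"
  have e2: "e2 = 0" using H dd by simp
  have c2: "c2 = b2 * e1" using H dd e2 by (simp add: algebra_simps)
  have a2: "a2 = b2 * p" using H dd c2 by (simp add: p_def algebra_simps)
  have "a1 * b2 = b1 * p * b2" using H a2 by (simp add: algebra_simps)
  then have a1: "a1 = b1 * p" using b2 by simp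
  have c1: "c1 = b1 * e1 + p" by (simp add: p_def)
  define B where "B = E b1 + \<epsilon> * E b2"
  define P where "P = E p"
  define R where "R = E e1"
  have qa: "qel E \<epsilon> a1 a2 = B * P" using eb by (simp add: qel_def B_def P_def a1 a2 algebra_simps)
  have qc: "qel E \<epsilon> c1 c2 = B * R + P" using eb by (simp add: qel_def B_def P_def R_def c1 c2 algebra_simps)
  have qe: "qel E \<epsilon> e1 e2 = R" using eb by (simp add: qel_def R_def e2)
  have qb: "qel E \<epsilon> b1 b2 = B" by (simp add: qel_def B_def)
  have qd: "qel E \<epsilon> d1 d2 = 1" by (rule d)
  have "\<not> conic_nonsingular (B * P) B (B * R + P) 1 R"
    unfolding conic_nonsingular_def
    apply (rule notI, erule notE)
    apply (rule exI[of _ 1], rule exI[of _ "- P + R * B"], rule exI[of _ "- B"])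
    by (simp add: algebra_simps power2_eq_square)
  then show False using ns qa qb qc qd qe by simp
qed


lemma count_inf:
  fixes S :: "'k::{finite,field} \<times> 'k \<times> 'k \<times> 'k \<Rightarrow> bool"
  assumes hS: "\<And>t1 t2. S (t1, t2, 0, 0)"
  shows "count_points4 (\<lambda>(t1, t2, X, Z). S (t1, t2, X, Z) \<and> X = 0 \<and> Z = 0)
         = card (UNIV :: 'k set) + 1"
proof -
  let ?f = "\<lambda>t::'k. proj_point4 (1, t, 0, 0)"
  have eq: "{proj_point4 v | v. v \<noteq> (0, 0, 0, 0) \<and> (\<lambda>(t1, t2, X, Z). S (t1, t2, X, Z) \<and> X = 0 \<and> Z = 0) v}
      = insert (proj_point4 (0, 1, 0, 0)) (range ?f)" (is "?L = ?R")
  proof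
    show "?L \<subseteq> ?R"
    proof
      fix P assume "P \<in> ?L"
      then obtain t1 t2 where P: "P = proj_point4 (t1, t2, 0, 0)" "(t1, t2) \<noteq> (0, 0)" by auto
      show "P \<in> ?R"
      proof (cases "t1 = 0")
        case True
        then have "(t1, t2, 0, 0) = scale4 t2 (0, 1, 0, 0)" by (simp add: scale4_def)
        then show ?thesis using P True proj_scale[of t2 "(0, 1, 0, 0)"] by auto
      next
        case False
        then have "(t1, t2, 0, 0) = scale4 t1 (1, t2 / t1, 0, 0)" by (simp add: scale4_def)
        then show ?thesis using P False proj_scale[of t1 "(1, t2 / t1, 0, 0)"] by auto
      qed
    qed
  next
    show "?R \<subseteq> ?L" using hS by force
  qed
  have inj: "inj ?f"
  proof
    fix s t :: 'k assume "?f s = ?f t"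
    then have "(1, s, 0, 0) \<in> proj_point4 (1, t, 0, 0)" using self_in_proj by metis
    then show "s = t" by (auto simp: proj_point4_def scale4_def)
  qed
  have notin: "proj_point4 (0, 1, 0, 0) \<notin> range ?f"
  proof
    assume "proj_point4 (0, 1, 0, 0) \<in> range ?f"
    then obtain t :: 'k where "proj_point4 (0, 1, 0, 0) = ?f t" by auto
    then have "(1, t, 0, 0) \<in> proj_point4 (0, 1, 0, 0)" using self_in_proj by metis
    then show False by (auto simp: proj_point4_def scale4_def)
  qed
  have "card ?R = card (range ?f) + 1" using notin by simp
  also have "card (range ?f) = card (UNIV :: 'k set)" using inj by (simp add: card_image)
  finally show ?thesis unfolding count_points4_def eq by simp
qed

lemma count_zero:
  fixes S :: "'k::{finite,field} \<times> 'k \<times> 'k \<times> 'k \<Rightarrow> bool"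
  assumes hS: "\<And>X Z. S (0, 0, X, Z) \<longleftrightarrow> A * X^3 + B * X^2 * Z + C * X * Z^2 + D * Z^3 = 0"
    and nz: "\<not> (A = 0 \<and> B = 0 \<and> C = 0 \<and> D = 0)"
  shows "count_points4 (\<lambda>(t1, t2, X, Z). S (t1, t2, X, Z) \<and> t1 = 0 \<and> t2 = 0) \<le> 3"
proof -
  define R where "R = {x::'k. poly [:D, C, B, A:] x = 0}"
  let ?f = "\<lambda>x::'k. proj_point4 (0, 0, x, 1)"
  define T0 where "T0 = (if A = 0 then {proj_point4 (0, 0, 1, 0::'k)} else {})"
  let ?T = "T0 \<union> ?f ` R"
  have sub: "{proj_point4 v | v. v \<noteq> (0, 0, 0, 0) \<and> (\<lambda>(t1, t2, X, Z). S (t1, t2, X, Z) \<and> t1 = 0 \<and> t2 = 0) v}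
      \<subseteq> ?T" (is "?L \<subseteq> _")
  proof
    fix P assume "P \<in> ?L"
    then obtain X Z where P: "P = proj_point4 (0, 0, X, Z)" "(X, Z) \<noteq> (0, 0)"
      and c: "A * X^3 + B * X^2 * Z + C * X * Z^2 + D * Z^3 = 0" using hS by auto
    show "P \<in> ?T"
    proof (cases "Z = 0")
      case True
      then have X: "X \<noteq> 0" using P by simp
      then have "A = 0" using c True by simp
      moreover have "(0, 0, X, Z) = scale4 X (0, 0, 1, 0)" using True by (simp add: scale4_def)
      ultimately show ?thesis using P X proj_scale[of X "(0, 0, 1, 0)"] by (auto simp: T0_def)
    next
      case False
      have sc: "(0, 0, X, Z) = scale4 Z (0, 0, X / Z, 1)" using False by (simp add: scale4_def)
      have "Z^3 * poly [:D, C, B, A:] (X / Z) = A * X^3 + B * X^2 * Z + C * X * Z^2 + D * Z^3"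
        using False by (simp add: field_simps power2_eq_square power3_eq_cube)
      then have "X / Z \<in> R" using c False by (simp add: R_def)
      then show ?thesis using P sc False proj_scale[of Z "(0, 0, X / Z, 1)"] by auto
    qed
  qed
  have "card ?L \<le> card ?T" by (rule card_mono[OF _ sub]) simp
  also have "\<dots> \<le> card T0 + card (?f ` R)"
    by (rule card_Un_le)
  also have "\<dots> \<le> (if A = 0 then 1 else 0) + card R"
    using card_image_le[of R ?f] by (simp add: T0_def)
  also have "\<dots> \<le> 3"
  proof (cases "A = 0")
    case True
    then have "[:D, C, B, A:] = [:D, C, B:]" by simp
    moreover have "[:D, C, B:] \<noteq> 0" using nz True by auto
    ultimately have "card R \<le> degree [:D, C, B:]" unfolding R_def
      by (metis card_poly_roots_bound)
    moreover have "degree [:D, C, B:] \<le> 2" by simp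
    ultimately show ?thesis using True by simp
  next
    case False
    then have "card R \<le> degree [:D, C, B, A:]" unfolding R_def
      by (intro card_poly_roots_bound) simp
    moreover have "degree [:D, C, B, A:] \<le> 3" by simp
    ultimately show ?thesis using False by simp
  qed
  finally show ?thesis unfolding count_points4_def .
qed

theorem mainTheorem8:
  fixes emb :: "'k::{finite,field} \<Rightarrow> 'K::{finite,field}"
    and q :: nat and \<omega> :: 'k and \<epsilon> :: 'K
    and a1 a2 b1 b2 c1 c2 d1 d2 e1 e2 :: 'k
  assumes "card (UNIV :: 'k set) = q" and "odd q"
    and "card (UNIV :: 'K set) = q^2"
    and "field_emb emb"
    and "\<not> (\<exists>x::'k. x^2 = \<omega>)"
    and "\<epsilon>^2 = emb \<omega>"
    and "conic_nonsingular (qel emb \<epsilon> a1 a2) (qel emb \<epsilon> b1 b2) (qel emb \<epsilon> c1 c2)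
           (qel emb \<epsilon> d1 d2) (qel emb \<epsilon> e1 e2)"
    and "qel emb \<epsilon> d1 d2 = 1"
    and "qel emb \<epsilon> b1 b2 \<notin> range emb"
  shows "let A = - a2 * b1 + a1 * b2;
             B = b2 * c1 - b1 * c2 - a2 * d1 + a1 * d2;
             C = - c2 * d1 + c1 * d2 + b2 * e1 - b1 * e2;
             D = d2 * e1 - d1 * e2;
             S = surfS \<omega> b1 b2 d1 d2 A B C D;
             n0 = count_points4 (\<lambda>(t1, t2, X, Z). S (t1, t2, X, Z) \<and> t1 = 0 \<and> t2 = 0);
             ninf = count_points4 (\<lambda>(t1, t2, X, Z). S (t1, t2, X, Z) \<and> X = 0 \<and> Z = 0)
         in ninf = q + 1 \<and> n0 \<in> {0, 1, 2, 3}"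
  proof -
  define A where "A = - a2 * b1 + a1 * b2"
  define B where "B = b2 * c1 - b1 * c2 - a2 * d1 + a1 * d2"
  define C where "C = - c2 * d1 + c1 * d2 + b2 * e1 - b1 * e2"
  define D where "D = d2 * e1 - d1 * e2"
  define S where "S = surfS \<omega> b1 b2 d1 d2 A B C D"
  have nz: "\<not> (A = 0 \<and> B = 0 \<and> C = 0 \<and> D = 0)"
    unfolding A_def B_def C_def D_def
    by (rule cubic_nonzero[OF assms(4) assms(5) assms(6) assms(7) assms(8) assms(9)])
  have h1: "\<And>t1 t2. S (t1, t2, 0, 0)" by (simp add: S_def surfS_def)
  have h2: "\<And>X Z. S (0, 0, X, Z) \<longleftrightarrow> A * X^3 + B * X^2 * Z + C * X * Z^2 + D * Z^3 = 0"
    by (simp add: S_def surfS_def)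
  have i: "count_points4 (\<lambda>(t1, t2, X, Z). S (t1, t2, X, Z) \<and> X = 0 \<and> Z = 0) = q + 1"
    using count_inf[of S, OF h1] assms(1) by simp
  have z: "count_points4 (\<lambda>(t1, t2, X, Z). S (t1, t2, X, Z) \<and> t1 = 0 \<and> t2 = 0) \<le> 3"
    by (rule count_zero[of S, OF h2 nz])
  have z': "count_points4 (\<lambda>(t1, t2, X, Z). S (t1, t2, X, Z) \<and> t1 = 0 \<and> t2 = 0) \<in> {0, 1, 2, 3}"
    using z by auto
  show ?thesis unfolding Let_def using i z' by (simp add: A_def B_def C_def D_def S_def)
qed

end
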